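(* Let $q$ be a power of $2$ and let $F$ be a field of characteristic $2$ containing $\mathbb{F}_q$. Let $L\in F[x]$ be a $q$-polynomial of $q$-degree $n$ with distinct roots. Then, unless $q=n=2$, the Galois group of $L$ over $F$, considered as a permutation group on the $q^n-1$ roots of $L(x)/x$, is contained in the alternating group $A_{q^n-1}$.
   Context: A $q$-polynomial over a field $F\supseteq\mathbb{F}_q$ is a polynomial of the form $a_0x+a_1x^q+\cdots+a_nx^{q^n}\in F[x]$; if $a_n\neq 0$ its $q$-degree is $n$. *)

theory Defs
  imports "HOL-Computational_Algebra.Polynomial" "HOL-Combinatorics.Permutations"
begin

definition subfield :: "'k::field set \<Rightarrow> bool" where
  "subfield K \<longleftrightarrow> 0 \<in> K \<and> 1 \<in> K \<and>
     (\<forall>x\<in>K. \<forall>y\<in>K. x + y \<in> K \<and> x - y \<in> K \<and> x * y \<in> K) \<and>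
     (\<forall>x\<in>K. x \<noteq> 0 \<longrightarrow> inverse x \<in> K)"

definition gen_subfield :: "'k::field set \<Rightarrow> 'k set" where
  "gen_subfield S = \<Inter> {K. subfield K \<and> S \<subseteq> K}"

definition q_polynomial :: "nat \<Rightarrow> nat \<Rightarrow> 'k::field poly \<Rightarrow> bool" where
  "q_polynomial q n L \<longleftrightarrow> coeff L (q ^ n) \<noteq> 0 \<and>
     (\<forall>i. coeff L i \<noteq> 0 \<longrightarrow> (\<exists>j\<le>n. i = q ^ j))"

text \<open>Roots of L(x)/x, i.e. the nonzero roots of L in 'k.\<close>
definition nonzero_roots :: "'k::field poly \<Rightarrow> 'k set" where
  "nonzero_roots L = {x. poly L x = 0 \<and> x \<noteq> 0}"

text \<open>Splitting field of L over F inside 'k (assuming L splits in 'k).\<close>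
definition splitting_field :: "'k::field set \<Rightarrow> 'k poly \<Rightarrow> 'k set" where
  "splitting_field F L = gen_subfield (F \<union> {x. poly L x = 0})"

text \<open>Galois group of L over F: automorphisms of the splitting field E fixing F pointwise
  (represented as functions on 'k, only their values on E matter).\<close>
definition galois_group :: "'k::field set \<Rightarrow> 'k poly \<Rightarrow> ('k \<Rightarrow> 'k) set" where
  "galois_group F L = {\<sigma>. let E = splitting_field F L in
      bij_betw \<sigma> E E \<and>
      (\<forall>x\<in>E. \<forall>y\<in>E. \<sigma> (x + y) = \<sigma> x + \<sigma> y \<and> \<sigma> (x * y) = \<sigma> x * \<sigma> y) \<and>
      (\<forall>a\<in>F. \<sigma> a = a)}"

definition induced_perm :: "('k \<Rightarrow> 'k) \<Rightarrow> 'k set \<Rightarrow> 'k \<Rightarrow> 'k" where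
  "induced_perm \<sigma> R = (\<lambda>x. if x \<in> R then \<sigma> x else x)"

end

theory Submission
  imports Defs "HOL-Combinatorics.Cycles" "HOL-Computational_Algebra.Primes"
begin


lemma evenperm_cycle_of_list:
  "distinct cs \<Longrightarrow> evenperm (cycle_of_list cs) \<longleftrightarrow> even (length cs - 1)"
  by (induction cs rule: cycle_of_list.induct)
     (auto simp: evenperm_comp permutation_swap_id permutation_of_cycle evenperm_swap)

lemma uniform_orbits:
  fixes p :: "'a \<Rightarrow> 'a"
  assumes "p permutes S" "finite S" "d > 0" "\<forall>x\<in>S. least_power p x = d"
  shows "d dvd card S \<and> (evenperm p \<longleftrightarrow> even ((d - 1) * (card S div d)))"
  using assms
proof (induct "card S" arbitrary: S p rule: less_induct)
  case less
  show ?case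
  proof (cases "S = {}")
    case True
    then have "p = id" using less(2) by (simp add: permutes_empty)
    then show ?thesis using True by simp
  next
    case False
    then obtain s where "s \<in> S" by blast
    have perm: "permutation p" using less(2,3) permutation_permutes by blast
    define C where "C = set (support p s)"
    define q where "q = (\<lambda>y. if y \<in> S - C then p y else y)"
    have pq: "cycle_of_list (support p s) \<circ> q = p"
    proof
      fix a
      consider "a \<in> S - set (support p s)" | "a \<in> set (support p s)" | "a \<notin> S" "a \<notin> set (support p s)"
        by blast
      thus "((cycle_of_list (support p s) \<circ> q)) a = p a"
      proof cases
        case 1
        have "(p ^^ 1) a \<in> set (support p a)"
          unfolding support_set[OF perm] by blast
        with \<open>a \<in> S - set (support p s)\<close> have "p a \<notin> set (support p s)"
          using disjoint_support'[OF perm, of a s] by auto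
        with \<open>a \<in> S - set (support p s)\<close> show ?thesis
          using id_outside_supp[of _ "support p s"] unfolding q_def C_def by simp
      next
        case 2 thus ?thesis
          using cycle_restrict[OF perm] unfolding q_def C_def by simp
      next
        case 3 thus ?thesis
          using id_outside_supp[OF 3(2)] less(2) permutes_not_in unfolding q_def by fastforce
      qed
    qed
    have qperm: "q permutes S - C"
      using semidecomposition[OF less(2,3), of s] unfolding q_def C_def .
    have dist: "distinct (support p s)" using cycle_of_permutation[OF perm] .
    have lenC: "length (support p s) = d" using less(5) \<open>s\<in>S\<close> by simp
    have cardC: "card C = d" using distinct_card[OF dist] lenC C_def by simp
    have CS: "C \<subseteq> S"
      unfolding C_def using permutes_in_image[OF permutes_funpow[OF less(2)]] \<open>s\<in>S\<close> by auto
    have fC: "finite C" unfolding C_def by simp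
    have cSC: "card (S - C) = card S - d" using card_Diff_subset[OF fC CS] cardC by simp
    have dle: "d \<le> card S" using card_mono[OF less(3) CS] cardC by simp
    have lt: "card (S - C) < card S" using cSC dle less(4) by simp
    have pow: "(q ^^ i) x = (p ^^ i) x" if "x \<in> S - C" for x i
    proof (induct i)
      case 0 then show ?case by simp
    next
      case (Suc i)
      have "(q ^^ i) x \<in> S - C" using permutes_in_image[OF permutes_funpow[OF qperm]] that by blast
      then show ?case using Suc by (simp add: q_def)
    qed
    have lpq: "\<forall>x\<in>S-C. least_power q x = d"
    proof
      fix x assume x: "x \<in> S - C"
      have "least_power q x = least_power p x"
        unfolding least_power_def using pow[OF x] by simp
      then show "least_power q x = d" using less(5) x by simp
    qed
    have IH: "d dvd card (S - C) \<and> (evenperm q \<longleftrightarrow> even ((d - 1) * (card (S - C) div d)))"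
      using less(1)[OF lt qperm _ less(4) lpq] less(3) by simp
    have qp: "permutation q" using qperm less(3) permutation_permutes by blast
    have ev: "evenperm p \<longleftrightarrow> (even (d - 1) \<longleftrightarrow> evenperm q)"
      using evenperm_comp[OF permutation_of_cycle qp, of "support p s"] pq
        evenperm_cycle_of_list[OF dist] lenC by simp
    have cS: "card S = d + card (S - C)" using cSC dle by simp
    obtain k where k: "card (S - C) = d * k" using IH by blast
    have "card S = d * (k + 1)" using cS k by simp
    moreover have "card S div d = k + 1" "card (S - C) div d = k" using cS k less(4) by simp_all
    ultimately show ?thesis using ev IH by auto
  qed
qed




definition ksub :: "'k::field set \<Rightarrow> 'k set \<Rightarrow> bool" where
  "ksub K A \<longleftrightarrow> 0 \<in> A \<and> (\<forall>x\<in>A. \<forall>y\<in>A. x + y \<in> A) \<and> (\<forall>c\<in>K. \<forall>x\<in>A. c * x \<in> A)"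

lemma c2_eq: fixes x y :: "'k::field" assumes c2: "\<And>z::'k. z + z = 0"
  shows "x + y = 0 \<longleftrightarrow> x = y"
proof
  assume "x + y = 0"
  then have "x + y + y = y" by simp
  then show "x = y" using c2[of y] by (simp add: add.assoc)
next
  assume "x = y" then show "x + y = 0" using c2 by simp
qed

lemma subspace_card:
  fixes K A B :: "'k::field set"
  assumes c2: "\<And>x::'k. x + x = 0"
    and K0: "0 \<in> K" and K1: "1 \<in> K"
    and Kadd: "\<And>x y. x \<in> K \<Longrightarrow> y \<in> K \<Longrightarrow> x + y \<in> K"
    and Kmul: "\<And>x y. x \<in> K \<Longrightarrow> y \<in> K \<Longrightarrow> x * y \<in> K"
    and Kinv: "\<And>x. x \<in> K \<Longrightarrow> x \<noteq> 0 \<Longrightarrow> inverse x \<in> K"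
    and Kfin: "finite K"
    and sA: "ksub K A" and sB: "ksub K B" and AB: "A \<subseteq> B" and fB: "finite B"
  shows "\<exists>e. card B = card K ^ e * card A \<and> (A \<noteq> B \<longrightarrow> e \<ge> 1)"
  using sA AB
proof (induct "card B - card A" arbitrary: A rule: less_induct)
  case less
  show ?case
  proof (cases "A = B")
    case True then show ?thesis by (intro exI[of _ 0]) simp
  next
    case False
    then obtain b where b: "b \<in> B" "b \<notin> A" using less(3) by blast
    define A' where "A' = (\<lambda>(x, l). x + l * b) ` (A \<times> K)"
    have fA: "finite A" using less(3) fB finite_subset by blast
    have inj: "inj_on (\<lambda>(x, l). x + l * b) (A \<times> K)"
    proof (rule inj_onI, clarify)
      fix x l x' l' assume x: "x \<in> A" "l \<in> K" "x' \<in> A" "l' \<in> K" and eq: "x + l * b = x' + l' * b"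
      have e1: "(x + l * b) + (x' + l' * b) = 0" using eq c2_eq[OF c2] by blast
      have "(x + x') + (l + l') * b = (x + l * b) + (x' + l' * b)" by (simp add: algebra_simps)
      then have e2: "(x + x') + (l + l') * b = 0" using e1 by simp
      have e3: "x + x' = (l + l') * b" using c2_eq[OF c2] e2 by blast
      show "x = x' \<and> l = l'"
      proof (cases "l + l' = 0")
        case True
        then have "l = l'" using c2_eq[OF c2] by blast
        then show ?thesis using eq by simp
      next
        case False
        have "b = inverse (l + l') * (x + x')" using e3 False by (simp add: field_simps)
        moreover have "x + x' \<in> A" using less(2) x unfolding ksub_def by blast
        moreover have "inverse (l + l') \<in> K" using Kinv Kadd x False by blast
        ultimately have "b \<in> A" using less(2) unfolding ksub_def by blast
        then show ?thesis using b by blast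
      qed
    qed
    have cA': "card A' = card A * card K" unfolding A'_def
      using card_image[OF inj] card_cartesian_product by simp
    have sA': "ksub K A'"
      unfolding ksub_def
    proof (intro conjI ballI)
      show "0 \<in> A'" unfolding A'_def using less(2) K0 unfolding ksub_def by force
    next
      fix y z assume "y \<in> A'" "z \<in> A'"
      then obtain x l x' l' where y: "y = x + l * b" "x \<in> A" "l \<in> K"
        and z: "z = x' + l' * b" "x' \<in> A" "l' \<in> K" unfolding A'_def by auto
      have "y + z = (x + x') + (l + l') * b" using y z by (simp add: algebra_simps)
      moreover have "x + x' \<in> A" using less(2) y z unfolding ksub_def by blast
      moreover have "l + l' \<in> K" using Kadd y z by blast
      ultimately show "y + z \<in> A'" unfolding A'_def by force
    next
      fix c y assume c: "c \<in> K" and "y \<in> A'"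
      then obtain x l where y: "y = x + l * b" "x \<in> A" "l \<in> K" unfolding A'_def by auto
      have "c * y = c * x + (c * l) * b" using y by (simp add: algebra_simps)
      moreover have "c * x \<in> A" using less(2) y c unfolding ksub_def by blast
      moreover have "c * l \<in> K" using Kmul y c by blast
      ultimately show "c * y \<in> A'" unfolding A'_def by force
    qed
    have AA': "A \<subseteq> A'"
    proof
      fix x assume "x \<in> A"
      then have "x = x + 0 * b \<and> (x, 0) \<in> A \<times> K" using K0 by simp
      then show "x \<in> A'" unfolding A'_def by force
    qed
    have bA': "b \<in> A'"
    proof -
      have "b = 0 + 1 * b \<and> (0, 1) \<in> A \<times> K" using K1 less(2) unfolding ksub_def by simp
      then show ?thesis unfolding A'_def by force
    qed
    have A'B: "A' \<subseteq> B"
    proof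
      fix y assume "y \<in> A'"
      then obtain x l where y: "y = x + l * b" "x \<in> A" "l \<in> K" unfolding A'_def by auto
      then have "x \<in> B" "l * b \<in> B" using less(3) sB b unfolding ksub_def by auto
      then show "y \<in> B" using sB y unfolding ksub_def by blast
    qed
    have "card A < card A'"
      using psubset_card_mono[of A' A] AA' bA' b(2) A'B fB finite_subset by blast
    moreover have "card A' \<le> card B" using card_mono[OF fB A'B] .
    ultimately have lt: "card B - card A' < card B - card A" by simp
    obtain e where e: "card B = card K ^ e * card A'" using less(1)[OF lt sA' A'B] by blast
    show ?thesis
      by (intro exI[of _ "Suc e"]) (simp add: e cA')
  qed
qed

lemma induced_permutes:
  assumes "finite A" "inj_on f A" "f ` A \<subseteq> A"
  shows "induced_perm f A permutes A"
proof (rule bij_imp_permutes)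
  have "f ` A = A" using assms by (simp add: endo_inj_surj)
  then have "bij_betw f A A" using assms(2) by (simp add: bij_betw_def)
  then show "bij_betw (induced_perm f A) A A"
    by (rule bij_betw_cong[THEN iffD1, rotated]) (simp add: induced_perm_def)
next
  fix x assume "x \<notin> A" then show "induced_perm f A x = x" by (simp add: induced_perm_def)
qed

lemma evenperm_funpow:
  assumes "permutation p" shows "evenperm (p ^^ n) \<longleftrightarrow> (even n \<or> evenperm p)"
proof (induct n)
  case 0 then show ?case by simp
next
  case (Suc n)
  have "evenperm (p ^^ Suc n) = (evenperm p = evenperm (p ^^ n))"
    using evenperm_comp[OF assms permutation_funpow[OF assms], of n] by (simp only: funpow.simps(2))
  then show ?case using Suc by (auto simp del: funpow.simps)
qed

lemma pow2_odd_decomp: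
  fixes M :: nat assumes "M > 0" shows "\<exists>a r. M = 2 ^ a * r \<and> odd r"
  using assms
proof (induct M rule: less_induct)
  case (less M)
  show ?case
  proof (cases "even M")
    case True
    then obtain M' where M': "M = 2 * M'" by blast
    then have "M' < M" "M' > 0" using less(2) by auto
    then obtain a r where "M' = 2 ^ a * r" "odd r" using less(1) by blast
    then show ?thesis using M' by (intro exI[of _ "Suc a"] exI[of _ r]) simp
  next
    case False then show ?thesis by (intro exI[of _ 0] exI[of _ M]) simp
  qed
qed




locale unip =
  fixes K :: "'k::field set" and V :: "'k set" and u :: "'k \<Rightarrow> 'k" and aa m n :: nat
  assumes c2: "\<And>x::'k. x + x = 0"
    and K0: "0 \<in> K" and K1: "1 \<in> K"
    and Kadd: "\<And>x y. x \<in> K \<Longrightarrow> y \<in> K \<Longrightarrow> x + y \<in> K"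
    and Kmul: "\<And>x y. x \<in> K \<Longrightarrow> y \<in> K \<Longrightarrow> x * y \<in> K"
    and Kinv: "\<And>x. x \<in> K \<Longrightarrow> x \<noteq> 0 \<Longrightarrow> inverse x \<in> K"
    and Kfin: "finite K" and Kcard: "card K = 2 ^ m" and m1: "m \<ge> 1"
    and sV: "ksub K V" and Vfin: "finite V" and Vcard: "card V = (2 ^ m) ^ n"
    and exc: "\<not> (m = 1 \<and> n = 2)"
    and uperm: "u permutes V"
    and uadd: "\<And>x y. x \<in> V \<Longrightarrow> y \<in> V \<Longrightarrow> u (x + y) = u x + u y"
    and ulin: "\<And>c x. c \<in> K \<Longrightarrow> x \<in> V \<Longrightarrow> u (c * x) = c * u x"
    and uord: "u ^^ (2 ^ aa) = id" and aa3: "aa \<ge> 3"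
begin

definition T where "T x = u x + x"
definition KK where "KK k = {x \<in> V. (T ^^ k) x = 0}"
definition FF where "FF j = {x \<in> V. (u ^^ (2 ^ j)) x = x}"
definition rr where "rr j = induced_perm u (FF j)"

lemma two0: "(2::'k) = 0" using c2[of 1] by simp

lemma V0: "0 \<in> V" using sV unfolding ksub_def by blast
lemma Vadd: "x \<in> V \<Longrightarrow> y \<in> V \<Longrightarrow> x + y \<in> V" using sV unfolding ksub_def by blast
lemma Vsc: "c \<in> K \<Longrightarrow> x \<in> V \<Longrightarrow> c * x \<in> V" using sV unfolding ksub_def by blast

lemma uV: "x \<in> V \<Longrightarrow> u x \<in> V" using permutes_in_image[OF uperm] by blast
lemma upV: "x \<in> V \<Longrightarrow> (u ^^ i) x \<in> V" by (induct i) (auto intro: uV)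
lemma upadd: "x \<in> V \<Longrightarrow> y \<in> V \<Longrightarrow> (u ^^ i) (x + y) = (u ^^ i) x + (u ^^ i) y"
  by (induct i) (auto simp: uadd upV)
lemma u0: "u 0 = 0"
proof -
  have "u (0 + 0) = u 0 + u 0" using uadd V0 by blast
  then show ?thesis using c2[of "u 0"] by simp
qed
lemma up0: "(u ^^ i) 0 = 0" by (induct i) (auto simp: u0)
lemma uinj: "x \<in> V \<Longrightarrow> y \<in> V \<Longrightarrow> u x = u y \<Longrightarrow> x = y"
  using permutes_inj[OF uperm] by (auto dest: injD)

lemma TV: "x \<in> V \<Longrightarrow> T x \<in> V" unfolding T_def by (intro Vadd uV)
lemma Tadd: "x \<in> V \<Longrightarrow> y \<in> V \<Longrightarrow> T (x + y) = T x + T y"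
  unfolding T_def by (simp add: uadd algebra_simps)
lemma Tlin: "c \<in> K \<Longrightarrow> x \<in> V \<Longrightarrow> T (c * x) = c * T x"
  unfolding T_def by (simp add: ulin algebra_simps)
lemma T0: "T 0 = 0" unfolding T_def by (simp add: u0)
lemma TpV: "x \<in> V \<Longrightarrow> (T ^^ i) x \<in> V" by (induct i) (auto intro: TV)
lemma Tpadd: "x \<in> V \<Longrightarrow> y \<in> V \<Longrightarrow> (T ^^ i) (x + y) = (T ^^ i) x + (T ^^ i) y"
  by (induct i) (auto simp: Tadd TpV)
lemma Tplin: "c \<in> K \<Longrightarrow> x \<in> V \<Longrightarrow> (T ^^ i) (c * x) = c * (T ^^ i) x"
  by (induct i) (auto simp: Tlin TpV)
lemma Tp0: "(T ^^ i) 0 = 0" by (induct i) (auto simp: T0)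

lemma KK_sub: "ksub K (KK k)"
  unfolding ksub_def KK_def using V0 Vadd Vsc Tp0 Tpadd Tplin by auto
lemma KK_V: "KK k \<subseteq> V" unfolding KK_def by auto

lemma KK_mono: "k \<le> l \<Longrightarrow> KK k \<subseteq> KK l"
proof
  fix x assume kl: "k \<le> l" and x: "x \<in> KK k"
  have "(T ^^ l) x = (T ^^ (l - k)) ((T ^^ k) x)"
    using kl by (metis funpow_add le_add_diff_inverse2 o_apply)
  then show "x \<in> KK l" using x Tp0 unfolding KK_def by auto
qed

lemma KK_step: assumes "KK k = KK (Suc k)" shows "KK (Suc k) = KK (Suc (Suc k))"
proof
  show "KK (Suc k) \<subseteq> KK (Suc (Suc k))" by (rule KK_mono) simp
next
  show "KK (Suc (Suc k)) \<subseteq> KK (Suc k)"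
  proof
    fix x assume x: "x \<in> KK (Suc (Suc k))"
    then have xV: "x \<in> V" and "(T ^^ Suc k) (T x) = 0"
      unfolding KK_def by (auto simp del: funpow.simps simp: funpow_Suc_right)
    then have "T x \<in> KK (Suc k)" unfolding KK_def using TV by auto
    then have "T x \<in> KK k" using assms by simp
    then have "(T ^^ Suc k) x = 0" unfolding KK_def by (simp add: funpow_Suc_right del: funpow.simps)
    then show "x \<in> KK (Suc k)" using xV unfolding KK_def by simp
  qed
qed

lemma KK_stable: assumes "KK k = KK (Suc k)" "k \<le> l" shows "KK l = KK k"
proof -
  have "KK l = KK k \<and> KK (Suc l) = KK k"
    using assms(2)
  proof (induct l rule: dec_induct)
    case base then show ?case using assms(1) by simp
  next
    case (step l)
    then have "KK (Suc (Suc l)) = KK (Suc l)" using KK_step[of l] by simp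
    then show ?case using step by simp
  qed
  then show ?thesis by simp
qed

lemma Tpow2: "x \<in> V \<Longrightarrow> (T ^^ (2 ^ j)) x = (u ^^ (2 ^ j)) x + x"
proof (induct j arbitrary: x)
  case 0 then show ?case by (simp add: T_def)
next
  case (Suc j)
  let ?U = "u ^^ (2 ^ j)"
  have "(T ^^ (2 ^ Suc j)) x = (T ^^ (2 ^ j)) ((T ^^ (2 ^ j)) x)"
    by (simp add: funpow_add mult_2)
  also have "\<dots> = (T ^^ (2 ^ j)) (?U x + x)" using Suc by simp
  also have "\<dots> = ?U (?U x + x) + (?U x + x)" using Suc.hyps[of "?U x + x"] Suc.prems upV Vadd by simp
  also have "\<dots> = ?U (?U x) + (?U x + ?U x) + x" using upadd[OF upV Suc.prems] Suc.prems
    by (simp add: algebra_simps)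
  also have "\<dots> = ?U (?U x) + x" using c2 by simp
  also have "?U (?U x) = (u ^^ (2 ^ Suc j)) x" by (simp add: funpow_add mult_2)
  finally show ?case .
qed

lemma FF_KK: "FF j = KK (2 ^ j)"
  unfolding FF_def KK_def using Tpow2 c2_eq[OF c2] by (auto simp: two0)

lemma FF_sub: "ksub K (FF j)" using KK_sub FF_KK by simp
lemma FF_V: "FF j \<subseteq> V" using KK_V FF_KK by simp
lemma FF_fin: "finite (FF j)" using FF_V Vfin finite_subset by blast
lemma FF_mono: "i \<le> j \<Longrightarrow> FF i \<subseteq> FF j" unfolding FF_KK by (intro KK_mono) simp
lemma FF_top: "FF aa = V" unfolding FF_def using uord by auto
lemma zero_FF: "0 \<in> FF j" unfolding FF_def using V0 up0 by simp

lemma FF_stable: assumes "FF j = FF (Suc j)" "j \<le> l" shows "FF l = FF j"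
proof -
  have "KK (2 ^ j) \<subseteq> KK (Suc (2 ^ j))" by (rule KK_mono) simp
  moreover have "KK (Suc (2 ^ j)) \<subseteq> KK (2 ^ Suc j)" by (rule KK_mono) simp
  ultimately have "KK (2 ^ j) = KK (Suc (2 ^ j))" using assms(1) unfolding FF_KK by blast
  moreover have "2 ^ j \<le> (2::nat) ^ l" using assms(2) by simp
  ultimately show ?thesis unfolding FF_KK using KK_stable by blast
qed

lemma sizes:
  assumes "ksub K A" "ksub K B" "A \<subseteq> B" "B \<subseteq> V"
  shows "\<exists>e. card B = 2 ^ (m * e) * card A \<and> (A \<noteq> B \<longrightarrow> e \<ge> 1)"
proof -
  have "finite B" using assms(4) Vfin finite_subset by blast
  then obtain e where "card B = card K ^ e * card A \<and> (A \<noteq> B \<longrightarrow> e \<ge> 1)"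
    using subspace_card[OF c2 K0 K1 Kadd Kmul Kinv Kfin assms(1-3)] by blast
  then show ?thesis by (intro exI[of _ e]) (simp add: Kcard power_mult)
qed

lemma u_FF: "x \<in> FF j \<Longrightarrow> u x \<in> FF j"
  unfolding FF_def using uV by (auto simp: funpow_swap1[symmetric])

lemma rr_perm: "rr j permutes FF j"
  unfolding rr_def
proof (rule induced_permutes[OF FF_fin])
  show "inj_on u (FF j)" using uinj FF_V by (meson inj_onI subsetD)
  show "u ` FF j \<subseteq> FF j" using u_FF by blast
qed

lemma rr0: "rr 0 = id"
proof
  fix x show "rr 0 x = id x" unfolding rr_def induced_perm_def FF_def by simp
qed

lemma rr_top: "rr aa = u"
proof
  fix x show "rr aa x = u x" unfolding rr_def induced_perm_def FF_top
    using permutes_not_in[OF uperm] by auto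
qed

lemma card_S: "card (FF (Suc j) - FF j) = card (FF (Suc j)) - card (FF j)"
  using card_Diff_subset[OF FF_fin FF_mono[of j "Suc j"]] by simp

lemma stepF:
  "2 ^ Suc j dvd card (FF (Suc j) - FF j) \<and>
   (evenperm (rr (Suc j)) \<longleftrightarrow> (evenperm (rr j) \<longleftrightarrow> even (card (FF (Suc j) - FF j) div 2 ^ Suc j)))"
proof -
  define S where "S = FF (Suc j) - FF j"
  define p where "p = induced_perm u S"
  have fS: "finite S" unfolding S_def using FF_fin by simp
  have uS: "u x \<in> S" if x: "x \<in> S" for x
  proof -
    have xV: "x \<in> V" using x FF_V unfolding S_def by blast
    have "u x \<in> FF (Suc j)" using u_FF x unfolding S_def by blast
    moreover have "u x \<notin> FF j"
    proof
      assume "u x \<in> FF j"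
      then have "u ((u ^^ (2 ^ j)) x) = u x" unfolding FF_def by (simp add: funpow_swap1)
      then have "(u ^^ (2 ^ j)) x = x" using uinj upV xV by blast
      then have "x \<in> FF j" using xV unfolding FF_def by simp
      then show False using x unfolding S_def by blast
    qed
    ultimately show ?thesis unfolding S_def by blast
  qed
  have pperm: "p permutes S" unfolding p_def
  proof (rule induced_permutes[OF fS])
    show "inj_on u S" using uinj FF_V unfolding S_def by (meson DiffD1 inj_onI subsetD)
    show "u ` S \<subseteq> S" using uS by blast
  qed
  have permp: "permutation p" using pperm fS permutation_permutes by blast
  have permr: "permutation (rr j)" using rr_perm FF_fin permutation_permutes by blast
  have comp: "rr (Suc j) = rr j \<circ> p"
  proof
    fix x
    show "rr (Suc j) x = (rr j \<circ> p) x"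
    proof (cases "x \<in> FF j")
      case True
      then have "x \<in> FF (Suc j)" using FF_mono[of j "Suc j"] by auto
      then show ?thesis using True u_FF[OF True]
        unfolding rr_def p_def induced_perm_def S_def by simp
    next
      case False
      show ?thesis
      proof (cases "x \<in> S")
        case True
        then show ?thesis using uS[OF True] False
          unfolding rr_def p_def induced_perm_def S_def by simp
      next
        case False
        then show ?thesis using \<open>x \<notin> FF j\<close>
          unfolding rr_def p_def induced_perm_def S_def by simp
      qed
    qed
  qed
  have pow: "(p ^^ i) x = (u ^^ i) x \<and> (u ^^ i) x \<in> S" if "x \<in> S" for x i
    using that by (induct i) (auto simp: p_def induced_perm_def uS)
  have lp: "least_power p x = 2 ^ Suc j" if x: "x \<in> S" for x
  proof -
    have xV: "x \<in> V" using x FF_V unfolding S_def by blast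
    have "(p ^^ (2 ^ Suc j)) x = x" using pow[OF x] x unfolding S_def FF_def by simp
    then have d1: "least_power p x dvd 2 ^ Suc j" using least_power_dvd[OF permp] by blast
    have "(p ^^ (2 ^ j)) x \<noteq> x" using pow[OF x] x xV unfolding S_def FF_def by simp
    then have d2: "\<not> least_power p x dvd 2 ^ j" using least_power_dvd[OF permp] by blast
    obtain i where i: "i \<le> Suc j" "least_power p x = 2 ^ i"
      using divides_primepow_nat[of 2 "least_power p x" "Suc j", THEN iffD1, OF _ d1] by auto
    have "\<not> i \<le> j" using d2 i(2) le_imp_power_dvd by metis
    then have "i = Suc j" using i(1) by simp
    then show ?thesis using i(2) by simp
  qed
  have U: "2 ^ Suc j dvd card S \<and> (evenperm p \<longleftrightarrow> even ((2 ^ Suc j - 1) * (card S div 2 ^ Suc j)))"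
    using uniform_orbits[OF pperm fS, of "2 ^ Suc j"] lp by simp
  have "odd ((2::nat) ^ Suc j - 1)" by simp
  then have "evenperm p \<longleftrightarrow> even (card S div 2 ^ Suc j)" using U by simp
  moreover have "evenperm (rr (Suc j)) \<longleftrightarrow> (evenperm (rr j) \<longleftrightarrow> evenperm p)"
    using evenperm_comp[OF permr permp] comp by simp
  ultimately show ?thesis using U unfolding S_def by simp
qed

lemma parity: "even (card (FF j)) \<longleftrightarrow> even (card (FF 0))"
proof (induct j)
  case 0 then show ?case by simp
next
  case (Suc j)
  have "card (FF (Suc j)) = card (FF j) + card (FF (Suc j) - FF j)"
    using card_S card_mono[OF FF_fin FF_mono[of j "Suc j"]] by simp
  moreover have "even (card (FF (Suc j) - FF j))"
  proof -
    have t: "2 dvd (2::nat) ^ Suc j" by simp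
    show ?thesis using dvd_trans[OF t] stepF[of j] by simp
  qed
  ultimately show ?case using Suc by simp
qed

lemma tail_dvd:
  assumes "2 ^ (j + 2) dvd card (FF j)" "j \<le> i" "FF i \<noteq> FF (Suc i)"
  shows "2 ^ (i + 2) dvd card (FF i)"
  using assms(2,3)
proof (induct i rule: dec_induct)
  case base then show ?case using assms(1) by simp
next
  case (step i)
  have "FF i \<noteq> FF (Suc i)"
  proof
    assume a: "FF i = FF (Suc i)"
    have "FF (Suc (Suc i)) = FF i" using FF_stable[OF a, of "Suc (Suc i)"] by simp
    then show False using step(4) a by simp
  qed
  then have IH: "2 ^ (i + 2) dvd card (FF i)" using step(3) by simp
  have sz: "\<exists>e. card (FF (Suc i)) = 2 ^ (m * e) * card (FF i) \<and> (FF i \<noteq> FF (Suc i) \<longrightarrow> e \<ge> 1)"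
    by (rule sizes[OF FF_sub FF_sub FF_mono FF_V]) simp
  obtain e where e: "card (FF (Suc i)) = 2 ^ (m * e) * card (FF i)" "e \<ge> 1"
    using sz \<open>FF i \<noteq> FF (Suc i)\<close> by blast
  have "1 * 1 \<le> m * e" by (rule mult_le_mono[OF m1 e(2)])
  then have me: "m * e = Suc (m * e - 1)" by simp
  define k :: nat where "k = 2 ^ (m * e - 1)"
  have k: "(2::nat) ^ (m * e) = 2 * k" unfolding k_def by (subst me) simp
  obtain c where c: "card (FF i) = 2 ^ (i + 2) * c" using IH by blast
  have "card (FF (Suc i)) = 2 ^ (Suc i + 2) * (k * c)" using e(1) k c by simp
  then show ?case by simp
qed

lemma tail:
  assumes "2 ^ (j + 2) dvd card (FF j)" "j \<le> i"
  shows "evenperm (rr i) \<longleftrightarrow> evenperm (rr j)"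
  using assms(2)
proof (induct i rule: dec_induct)
  case base then show ?case by simp
next
  case (step i)
  have "evenperm (rr (Suc i)) \<longleftrightarrow> (evenperm (rr i) \<longleftrightarrow> even (card (FF (Suc i) - FF i) div 2 ^ Suc i))"
    using stepF[of i] by blast
  have "even (card (FF (Suc i) - FF i) div 2 ^ Suc i)"
  proof (cases "FF i = FF (Suc i)")
    case True then show ?thesis by simp
  next
    case False
    then have d: "2 ^ (i + 2) dvd card (FF i)" using tail_dvd[OF assms(1) step(1)] by simp
    have sz: "\<exists>e. card (FF (Suc i)) = 2 ^ (m * e) * card (FF i) \<and> (FF i \<noteq> FF (Suc i) \<longrightarrow> e \<ge> 1)"
      by (rule sizes[OF FF_sub FF_sub FF_mono FF_V]) simp
    obtain e where e: "card (FF (Suc i)) = 2 ^ (m * e) * card (FF i)"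
      using sz by blast
    obtain c where c: "card (FF i) = 2 ^ (i + 2) * c" using d by blast
    have "card (FF (Suc i) - FF i) = 2 ^ (i + 2) * (2 ^ (m * e) * c - c)"
      using card_S e c by (simp add: diff_mult_distrib2 algebra_simps)
    also have "\<dots> = 2 ^ Suc i * (2 * (2 ^ (m * e) * c - c))" by simp
    finally show ?thesis by simp
  qed
  then show ?case using step(3) \<open>evenperm (rr (Suc i)) \<longleftrightarrow> _\<close> by simp
qed

end



context unip begin

lemma KK1: "FF 0 = KK 1" using FF_KK[of 0] by simp
lemma KK2: "FF 1 = KK 2" using FF_KK[of 1] by simp
lemma KK4: "FF 2 = KK 4" using FF_KK[of 2] by simp
lemma KK8: "FF 3 = KK 8" using FF_KK[of 3] by simp

lemma sizesFF: "i \<le> j \<Longrightarrow> \<exists>e. card (FF j) = 2 ^ (m * e) * card (FF i) \<and> (FF i \<noteq> FF j \<longrightarrow> e \<ge> 1)"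
  by (rule sizes[OF FF_sub FF_sub FF_mono FF_V])

lemma u_even: "evenperm u"
proof (cases "FF 0 = V")
  case True
  have "rr aa = rr 0" unfolding rr_def using True FF_top by simp
  then show ?thesis using rr_top rr0 by simp
next
  case F0: False
  have n1: "n \<ge> 1"
  proof (rule ccontr)
    assume "\<not> n \<ge> 1"
    then have "card V = 1" using Vcard by simp
    then obtain z where "V = {z}" using card_1_singletonE by blast
    then have "V = {0}" using V0 by simp
    then have "FF 0 = V" using FF_V[of 0] zero_FF[of 0] by blast
    then show False using F0 by simp
  qed
  have "even (card V)" using Vcard n1 m1 by simp
  then have evF0: "even (card (FF 0))" using parity[of aa] FF_top by simp
  have s0: "ksub K {0}" unfolding ksub_def by simp
  obtain e where e: "card (FF 0) = 2 ^ (m * e) * card {0::'k}" "{0} \<noteq> FF 0 \<longrightarrow> e \<ge> 1"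
    using sizes[OF s0 FF_sub _ FF_V, of 0] zero_FF by blast
  have "FF 0 \<noteq> {0}" using evF0 by auto
  then have e1: "e \<ge> 1" using e(2) by auto
  have cF0: "card (FF 0) = 2 ^ (m * e)" using e(1) by simp
  show ?thesis
  proof (cases "4 dvd card (FF 0)")
    case True
    then have "evenperm (rr aa) \<longleftrightarrow> evenperm (rr 0)" using tail[of 0 aa] by simp
    then show ?thesis using rr_top rr0 by simp
  next
    case False
    have "1 * 1 \<le> m * e" by (rule mult_le_mono[OF m1 e1])
    then have ge1: "1 \<le> m * e" by (simp only: mult_1)
    have "\<not> 2 \<le> m * e"
    proof
      assume "2 \<le> m * e"
      then have "(2::nat) ^ 2 dvd 2 ^ (m * e)" by (rule le_imp_power_dvd)
      then show False using False cF0 by simp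
    qed
    then have me: "m * e = 1" using ge1 by linarith
    then have m_1: "m = 1" by (simp add: mult_eq_1_iff)
    have c2F0: "card (FF 0) = 2" using cF0 me by simp
    have n2: "n \<noteq> 2" using exc m_1 by simp
    have "\<not> FF 0 \<subseteq> {0}"
    proof
      assume "FF 0 \<subseteq> {0}"
      then have "card (FF 0) \<le> card {0::'k}" by (rule card_mono[rotated]) simp
      then show False using c2F0 by simp
    qed
    then obtain v where v: "v \<in> FF 0" "v \<noteq> 0" by blast
    have F0v: "FF 0 = {0, v}"
    proof -
      have "{0, v} \<subseteq> FF 0" using v zero_FF by simp
      moreover have "card {0, v} = 2" using v by simp
      ultimately show ?thesis using card_subset_eq[OF FF_fin, of "{0, v}" 0] c2F0 by simp
    qed
    have F01: "FF 0 \<noteq> FF 1"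
    proof
      assume "FF 0 = FF 1"
      then have "FF aa = FF 0" using FF_stable[of 0 aa] by simp
      then show False using F0 FF_top by simp
    qed
    obtain w where w: "w \<in> FF 1" "w \<notin> FF 0" using F01 FF_mono[of 0 1] by auto
    have wV: "w \<in> V" using w FF_V by blast
    have TK: "T x \<in> FF 0" if "x \<in> FF 1" for x
    proof -
      have xV: "x \<in> V" using that FF_V by blast
      have "(T ^^ 2) x = 0" using that KK2 unfolding KK_def by simp
      then have "T (T x) = 0" by (simp add: numeral_2_eq_2)
      then show ?thesis using KK1 TV[OF xV] unfolding KK_def by simp
    qed
    have Tw: "T w = v"
    proof -
      have "T w \<noteq> 0" using w(2) wV KK1 unfolding KK_def by simp
      then show ?thesis using TK[OF w(1)] F0v by auto
    qed
    have F1sub: "FF 1 \<subseteq> set [0, v, w, v + w]"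
    proof
      fix x assume x: "x \<in> FF 1"
      have xV: "x \<in> V" using x FF_V by blast
      have "T x = 0 \<or> T x = v" using TK[OF x] F0v by auto
      then show "x \<in> set [0, v, w, v + w]"
      proof
        assume "T x = 0"
        then have "x \<in> FF 0" using KK1 xV unfolding KK_def by simp
        then show ?thesis using F0v by auto
      next
        assume Tx: "T x = v"
        have "T (x + w) = 0" using Tadd[OF xV wV] Tx Tw c2 by simp
        then have "x + w \<in> FF 0" using KK1 Vadd[OF xV wV] unfolding KK_def by simp
        then have "x + w = 0 \<or> x + w = v" using F0v by auto
        then show ?thesis
        proof
          assume "x + w = 0" then have "x = w" using c2_eq[OF c2] by blast
          then show ?thesis by simp
        next
          assume "x + w = v" then have "x = v + w"
            using c2[of w] by (metis add.assoc add_0_right)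
          then show ?thesis by simp
        qed
      qed
    qed
    have "card (FF 1) \<le> card (set [0, v, w, v + w])" by (rule card_mono[OF _ F1sub]) simp
    also have "\<dots> \<le> 4" using card_length[of "[0, v, w, v + w]"] by simp
    finally have le4: "card (FF 1) \<le> 4" .
    obtain e1' where e1': "card (FF 1) = 2 ^ (m * e1') * card (FF 0)" "FF 0 \<noteq> FF 1 \<longrightarrow> e1' \<ge> 1"
      using sizesFF[of 0 1] by auto
    have "e1' \<ge> 1" using e1'(2) F01 by simp
    then have "e1' = 1"
    proof -
      assume "e1' \<ge> 1"
      show "e1' = 1"
      proof (rule ccontr)
        assume "e1' \<noteq> 1"
        then have "2 \<le> e1'" using \<open>e1' \<ge> 1\<close> by simp
        then have "(2::nat) ^ 2 \<le> 2 ^ e1'" by (rule power_increasing) simp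
        then show False using le4 e1'(1) c2F0 m_1 by simp
      qed
    qed
    then have c4: "card (FF 1) = 4" using e1'(1) c2F0 m_1 by simp
    have F1V: "FF 1 \<noteq> V"
    proof
      assume "FF 1 = V"
      then have pe: "(2::nat) ^ n = 2 ^ 2" using c4 Vcard m_1 by simp
      have "n = 2" by (rule power_inject_exp[of "2::nat", THEN iffD1, OF _ pe]) simp
      then show False using n2 by simp
    qed
    have F12: "FF 1 \<noteq> FF 2"
    proof
      assume a: "FF 1 = FF 2"
      have a': "FF 1 = FF (Suc 1)" using a by (simp add: numeral_2_eq_2)
      have "FF aa = FF 1" using FF_stable[OF a', of aa] aa3 by simp
      then show False using F1V FF_top by simp
    qed
    obtain e2 where e2: "card (FF 2) = 2 ^ (m * e2) * card (FF 1)" "FF 1 \<noteq> FF 2 \<longrightarrow> e2 \<ge> 1"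
      using sizesFF[of 1 2] by auto
    have e21: "e2 \<ge> 1" using e2(2) F12 by simp
    have c2F2: "card (FF 2) = 2 ^ e2 * 4" using e2(1) c4 m_1 by simp
    have r1: "\<not> evenperm (rr 1)"
    proof -
      have "card (FF 1 - FF 0) = 2" using card_S[of 0] c4 c2F0 by simp
      then show ?thesis using stepF[of 0] rr0 by simp
    qed
    have r2: "evenperm (rr 2)"
    proof -
      have "card (FF 2 - FF 1) = 4 * (2 ^ e2 - 1)" using card_S[of 1] c2F2 c4
        by (simp add: numeral_2_eq_2 diff_mult_distrib2 algebra_simps)
      moreover have "odd ((2::nat) ^ e2 - 1)" using e21 by simp
      ultimately have "odd (card (FF 2 - FF 1) div 2 ^ 2)" by simp
      then show ?thesis using stepF[of 1] r1 by (simp add: numeral_2_eq_2)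
    qed
    show ?thesis
    proof (cases "e2 \<ge> 2")
      case True
      then have "(2::nat) ^ 2 dvd 2 ^ e2" by (rule le_imp_power_dvd)
      then obtain t where "(2::nat) ^ e2 = 2 ^ 2 * t" by blast
      then have "card (FF 2) = 2 ^ (2 + 2) * t" using c2F2 by simp
      then have "2 ^ (2 + 2) dvd card (FF 2)" by simp
      then have "evenperm (rr aa) \<longleftrightarrow> evenperm (rr 2)" using tail[of 2 aa] aa3 by simp
      then show ?thesis using r2 rr_top by simp
    next
      case False
      then have "e2 = 1" using e21 by simp
      then have c8: "card (FF 2) = 8" using c2F2 by simp
      have k23: "KK 2 \<noteq> KK 3"
      proof
        assume "KK 2 = KK 3"
        then have "KK 4 = KK 2" using KK_stable[of 2 4] by (simp add: numeral_3_eq_3 numeral_2_eq_2)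
        then show False using c8 c4 KK2 KK4 by simp
      qed
      have sK: "\<exists>e. card (KK 3) = 2 ^ (m * e) * card (KK 2) \<and> (KK 2 \<noteq> KK 3 \<longrightarrow> e \<ge> 1)"
        by (rule sizes[OF KK_sub KK_sub KK_mono KK_V]) simp
      then obtain e3 where e3: "card (KK 3) = 2 ^ e3 * 4" "e3 \<ge> 1"
        using k23 c4 KK2 m_1 by auto
      have "(2::nat) ^ 1 \<le> 2 ^ e3" using e3(2) by (rule power_increasing) simp
      then have ge8: "card (KK 3) \<ge> 8" using e3(1) by simp
      have "KK 3 \<subseteq> KK 4" by (rule KK_mono) simp
      moreover have "card (KK 4) = 8" using c8 KK4 by simp
      moreover have "finite (KK 4)" using KK_V Vfin finite_subset by blast
      ultimately have "KK 3 = KK 4"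
        using ge8 card_mono[of "KK 4" "KK 3"] card_subset_eq[of "KK 4" "KK 3"] by simp
      then have "KK 8 = KK 3" using KK_stable[of 3 8] by simp
      then have "FF 3 = FF 2" using KK8 KK4 \<open>KK 3 = KK 4\<close> by simp
      then have "FF aa = FF 2" using FF_stable[of 2 aa] aa3 by simp
      then have "rr aa = rr 2" unfolding rr_def by simp
      then show ?thesis using r2 rr_top by simp
    qed
  qed
qed

end



lemma core_even:
  fixes K V :: "'k::field set" and g :: "'k \<Rightarrow> 'k" and m n :: nat
  assumes c2: "\<And>x::'k. x + x = 0"
    and K0: "0 \<in> K" and K1: "1 \<in> K"
    and Kadd: "\<And>x y. x \<in> K \<Longrightarrow> y \<in> K \<Longrightarrow> x + y \<in> K"
    and Kmul: "\<And>x y. x \<in> K \<Longrightarrow> y \<in> K \<Longrightarrow> x * y \<in> K"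
    and Kinv: "\<And>x. x \<in> K \<Longrightarrow> x \<noteq> 0 \<Longrightarrow> inverse x \<in> K"
    and Kfin: "finite K" and Kcard: "card K = 2 ^ m" and m1: "m \<ge> 1"
    and sV: "ksub K V" and Vfin: "finite V" and Vcard: "card V = (2 ^ m) ^ n"
    and exc: "\<not> (m = 1 \<and> n = 2)"
    and gperm: "g permutes V"
    and gadd: "\<And>x y. x \<in> V \<Longrightarrow> y \<in> V \<Longrightarrow> g (x + y) = g x + g y"
    and glin: "\<And>c x. c \<in> K \<Longrightarrow> x \<in> V \<Longrightarrow> g (c * x) = c * g x"
  shows "evenperm g"
proof -
  have pg: "permutation g" using gperm Vfin permutation_permutes by blast
  obtain M where M: "g ^^ M = id" "M > 0" using permutation_is_nilpotent[OF pg] by blast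
  obtain a r where ar: "M = 2 ^ a * r" "odd r" using pow2_odd_decomp[OF M(2)] by blast
  define u where "u = g ^^ r"
  have ev: "evenperm u \<longleftrightarrow> evenperm g" unfolding u_def using evenperm_funpow[OF pg, of r] ar(2) by simp
  have gV: "x \<in> V \<Longrightarrow> (g ^^ i) x \<in> V" for x i
    using permutes_in_image[OF permutes_funpow[OF gperm]] by blast
  have uadd: "u (x + y) = u x + u y" if "x \<in> V" "y \<in> V" for x y
    unfolding u_def using that by (induct r) (auto simp: gadd gV)
  have ulin: "u (c * x) = c * u x" if "c \<in> K" "x \<in> V" for c x
    unfolding u_def using that by (induct r) (auto simp: glin gV)
  have uperm: "u permutes V" unfolding u_def by (rule permutes_funpow[OF gperm])
  have "u ^^ (2 ^ (a + 3)) = g ^^ (M * 8)"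
    unfolding u_def funpow_mult by (simp add: ar(1) power_add algebra_simps)
  also have "\<dots> = (g ^^ M) ^^ 8" by (simp add: funpow_mult algebra_simps)
  also have "\<dots> = id" using M(1) by simp
  finally have uord: "u ^^ (2 ^ (a + 3)) = id" .
  interpret unip K V u "a + 3" m n
    by unfold_locales (use c2 K0 K1 Kadd Kmul Kinv Kfin Kcard m1 sV Vfin Vcard exc uperm uadd ulin uord in auto)
  show ?thesis using u_even ev by simp
qed




lemma gen_subfield_props:
  shows "subfield (gen_subfield S)" and "S \<subseteq> gen_subfield S"
proof -
  show "S \<subseteq> gen_subfield S" unfolding gen_subfield_def by blast
  show "subfield (gen_subfield S)"
    unfolding subfield_def gen_subfield_def by (auto simp: subfield_def)
qed

lemma fin_subfield_pow:
  fixes K :: "'k::field set"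
  assumes sK: "subfield K" and fK: "finite K" and a: "a \<in> K"
  shows "a ^ card K = a"
proof (cases "a = 0")
  case True
  have "card K > 0" using fK a card_gt_0_iff by blast
  then show ?thesis using True by simp
next
  case False
  define K' where "K' = K - {0}"
  have fK': "finite K'" using fK unfolding K'_def by simp
  have mulK: "x \<in> K \<Longrightarrow> y \<in> K \<Longrightarrow> x * y \<in> K" for x y using sK unfolding subfield_def by blast
  have inj: "inj_on (\<lambda>x. a * x) K'" using False by (auto intro: inj_onI)
  have sub: "(\<lambda>x. a * x) ` K' \<subseteq> K'" using False a mulK unfolding K'_def by auto
  have img: "(\<lambda>x. a * x) ` K' = K'" using endo_inj_surj[OF fK' sub inj] .
  have "prod id K' = prod id ((\<lambda>x. a * x) ` K')" using img by simp
  also have "\<dots> = prod (\<lambda>x. a * x) K'" using prod.reindex[OF inj, of id] by simp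
  also have "\<dots> = a ^ card K' * prod id K'" by (simp add: prod.distrib)
  finally have eq: "prod id K' = a ^ card K' * prod id K'" .
  have "prod id K' \<noteq> 0" using fK' unfolding K'_def by simp
  then have a1: "a ^ card K' = 1" using eq by simp
  have "card K = Suc (card K')"
    unfolding K'_def using fK sK unfolding subfield_def
    by (metis card_Suc_Diff1)
  then show ?thesis using a1 by simp
qed

lemma frob2:
  fixes x y :: "'k::field" assumes two0: "(2::'k) = 0"
  shows "(x + y) ^ (2 ^ k) = x ^ (2 ^ k) + y ^ (2 ^ k)"
proof (induct k)
  case 0 then show ?case by simp
next
  case (Suc k)
  have "(x + y) ^ (2 ^ Suc k) = ((x + y) ^ (2 ^ k)) ^ 2" by (simp add: power_mult[symmetric] mult.commute)
  also have "\<dots> = (x ^ (2 ^ k) + y ^ (2 ^ k)) ^ 2" using Suc by simp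
  also have "\<dots> = (x ^ (2 ^ k)) ^ 2 + y ^ (2 ^ k) * x ^ (2 ^ k) * 2 + (y ^ (2 ^ k)) ^ 2"
    by (simp add: power2_eq_square algebra_simps)
  also have "\<dots> = (x ^ (2 ^ k)) ^ 2 + (y ^ (2 ^ k)) ^ 2" using two0 by simp
  also have "\<dots> = x ^ (2 ^ Suc k) + y ^ (2 ^ Suc k)" by (simp add: power_mult[symmetric] mult.commute)
  finally show ?case .
qed

lemma hom_poly:
  fixes E :: "'k::field set" and \<sigma> :: "'k \<Rightarrow> 'k"
  assumes sE: "subfield E"
    and hom: "\<forall>x\<in>E. \<forall>y\<in>E. \<sigma> (x + y) = \<sigma> x + \<sigma> y \<and> \<sigma> (x * y) = \<sigma> x * \<sigma> y"
    and s0: "\<sigma> 0 = 0"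
    and cf: "\<forall>i. coeff p i \<in> E \<and> \<sigma> (coeff p i) = coeff p i" and x: "x \<in> E"
  shows "\<sigma> (poly p x) = poly p (\<sigma> x) \<and> poly p x \<in> E"
  using cf
proof (induct p)
  case 0 then show ?case using s0 sE unfolding subfield_def by simp
next
  case (pCons a p)
  have cp: "\<forall>i. coeff p i \<in> E \<and> \<sigma> (coeff p i) = coeff p i"
    using pCons(3) by (metis coeff_pCons_Suc)
  have aE: "a \<in> E" "\<sigma> a = a" using pCons(3) by (metis coeff_pCons_0)+
  have IH: "\<sigma> (poly p x) = poly p (\<sigma> x)" "poly p x \<in> E" using pCons(2)[OF cp] by auto
  have m: "x * poly p x \<in> E" using sE IH x unfolding subfield_def by blast
  have "\<sigma> (a + x * poly p x) = \<sigma> a + \<sigma> (x * poly p x)" using hom aE m by blast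
  also have "\<sigma> (x * poly p x) = \<sigma> x * \<sigma> (poly p x)" using hom x IH by blast
  finally have "\<sigma> (poly (pCons a p) x) = poly (pCons a p) (\<sigma> x)" using aE IH by simp
  moreover have "poly (pCons a p) x \<in> E" using sE aE m unfolding subfield_def by simp
  ultimately show ?case by simp
qed




theorem theorem8:
  fixes F :: "'k::field set" and L :: "'k poly" and q n :: nat
  assumes char2: "CHAR('k) = 2"
    and q_pow2: "\<exists>m\<ge>1. q = 2 ^ m"
    and F_field: "subfield F"
    and F_contains_Fq: "\<exists>K. subfield K \<and> K \<subseteq> F \<and> finite K \<and> card K = q"
    and L_coeffs: "\<forall>i. coeff L i \<in> F"
    and L_qpoly: "q_polynomial q n L"
    and L_splits_distinct: "card {x. poly L x = 0} = degree L"
    and exc: "\<not> (q = 2 \<and> n = 2)"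
  shows "\<forall>\<sigma>\<in>galois_group F L.
           induced_perm \<sigma> (nonzero_roots L) permutes (nonzero_roots L) \<and>
           evenperm (induced_perm \<sigma> (nonzero_roots L))"
proof
  fix \<sigma> assume \<sigma>: "\<sigma> \<in> galois_group F L"
  have two0: "(2::'k) = 0" using of_nat_CHAR[where 'a='k] char2 by simp
  have c2: "x + x = 0" for x :: 'k
  proof -
    have "x + x = 2 * x" by simp
    then show ?thesis using two0 by simp
  qed
  obtain m where m: "m \<ge> 1" "q = 2 ^ m" using q_pow2 by blast
  obtain K where K: "subfield K" "K \<subseteq> F" "finite K" "card K = q" using F_contains_Fq by blast
  have K0: "0 \<in> K" and K1: "1 \<in> K" using K(1) unfolding subfield_def by auto
  have Kadd: "x \<in> K \<Longrightarrow> y \<in> K \<Longrightarrow> x + y \<in> K" for x y using K(1) unfolding subfield_def by blast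
  have Kmul: "x \<in> K \<Longrightarrow> y \<in> K \<Longrightarrow> x * y \<in> K" for x y using K(1) unfolding subfield_def by blast
  have Kinv: "x \<in> K \<Longrightarrow> x \<noteq> 0 \<Longrightarrow> inverse x \<in> K" for x using K(1) unfolding subfield_def by blast
  have "(2::nat) ^ 1 \<le> 2 ^ m" using m(1) by (rule power_increasing) simp
  then have q1: "q > 1" using m(2) by simp
  have cn: "coeff L (q ^ n) \<noteq> 0" and cz: "\<And>i. coeff L i \<noteq> 0 \<Longrightarrow> \<exists>j\<le>n. i = q ^ j"
    using L_qpoly unfolding q_polynomial_def by auto
  have degL: "degree L = q ^ n"
  proof (rule antisym)
    show "degree L \<le> q ^ n"
    proof (rule degree_le, intro allI impI, rule ccontr)
      fix i assume "q ^ n < i" "coeff L i \<noteq> 0"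
      then obtain j where "j \<le> n" "i = q ^ j" using cz by blast
      then have "i \<le> q ^ n" using q1 by (simp add: power_increasing)
      then show False using \<open>q ^ n < i\<close> by simp
    qed
    show "q ^ n \<le> degree L" using le_degree[OF cn] .
  qed
  have injq: "inj_on (\<lambda>j. q ^ j) {..n}" using q1 by (auto intro: inj_onI simp: power_inject_exp)
  have polyL: "poly L x = (\<Sum>j\<le>n. coeff L (q ^ j) * x ^ (q ^ j))" for x
  proof -
    have "poly L x = (\<Sum>i\<le>q ^ n. coeff L i * x ^ i)" using poly_altdef[of L x] degL by simp
    also have "\<dots> = (\<Sum>i\<in>(\<lambda>j. q ^ j) ` {..n}. coeff L i * x ^ i)"
    proof (rule sum.mono_neutral_right)
      show "finite {..q ^ n}" by simp
      show "(\<lambda>j. q ^ j) ` {..n} \<subseteq> {..q ^ n}" using q1 by (auto simp: power_increasing)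
      show "\<forall>i\<in>{..q ^ n} - (\<lambda>j. q ^ j) ` {..n}. coeff L i * x ^ i = 0" using cz by fastforce
    qed
    also have "\<dots> = (\<Sum>j\<le>n. coeff L (q ^ j) * x ^ (q ^ j))" using sum.reindex[OF injq] by simp
    finally show ?thesis .
  qed
  have qpow: "q ^ j = 2 ^ (m * j)" for j using m(2) by (simp add: power_mult)
  have frob: "(x + y) ^ (q ^ j) = x ^ (q ^ j) + y ^ (q ^ j)" for x y :: 'k and j
    unfolding qpow using frob2[OF two0] .
  have cpow: "c ^ (q ^ j) = c" if "c \<in> K" for c j
  proof (induct j)
    case 0 then show ?case by simp
  next
    case (Suc j)
    have "c ^ (q ^ Suc j) = (c ^ (q ^ j)) ^ q" by (simp add: power_mult[symmetric] mult.commute)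
    also have "\<dots> = c" using Suc fin_subfield_pow[OF K(1) K(3) that] K(4) by simp
    finally show ?case .
  qed
  have Ladd: "poly L (x + y) = poly L x + poly L y" for x y
    unfolding polyL by (simp add: frob distrib_left sum.distrib)
  have Llin: "poly L (c * x) = c * poly L x" if "c \<in> K" for c x
    unfolding polyL by (simp add: power_mult_distrib cpow[OF that] sum_distrib_left algebra_simps)
  define R where "R = {x. poly L x = 0}"
  have cardR: "card R = (2 ^ m) ^ n" using L_splits_distinct degL m(2) unfolding R_def by simp
  have finR: "finite R" using cardR card_ge_0_finite by (metis card.infinite power_not_zero zero_neq_numeral)
  have "poly L (0 * 0) = 0 * poly L 0" using Llin[OF K0] .
  then have "poly L 0 = 0" by simp
  then have sR: "ksub K R" unfolding ksub_def R_def using Ladd Llin by simp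
  have zR: "0 \<in> R" using sR unfolding ksub_def by blast
  define E where "E = splitting_field F L"
  have sE: "subfield E" and FRE: "F \<union> R \<subseteq> E"
    unfolding E_def splitting_field_def R_def using gen_subfield_props[of "F \<union> {x. poly L x = 0}"] by auto
  have bij: "bij_betw \<sigma> E E"
    and hom: "\<forall>x\<in>E. \<forall>y\<in>E. \<sigma> (x + y) = \<sigma> x + \<sigma> y \<and> \<sigma> (x * y) = \<sigma> x * \<sigma> y"
    and fixF: "\<forall>a\<in>F. \<sigma> a = a"
    using \<sigma> unfolding galois_group_def E_def Let_def by auto
  have E0: "0 \<in> E" using sE unfolding subfield_def by blast
  have s0: "\<sigma> 0 = 0"
  proof -
    have "\<sigma> (0 + 0) = \<sigma> 0 + \<sigma> 0" using hom E0 by blast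
    then show ?thesis using c2[of "\<sigma> 0"] by simp
  qed
  have cfE: "\<forall>i. coeff L i \<in> E \<and> \<sigma> (coeff L i) = coeff L i" using L_coeffs FRE fixF by blast
  have sR': "\<sigma> x \<in> R" if "x \<in> R" for x
  proof -
    have xE: "x \<in> E" using that FRE by blast
    have "\<sigma> (poly L x) = poly L (\<sigma> x)" using hom_poly[OF sE hom s0 cfE xE] by blast
    then show ?thesis using that s0 unfolding R_def by simp
  qed
  define g where "g = induced_perm \<sigma> R"
  have gperm: "g permutes R" unfolding g_def
  proof (rule induced_permutes[OF finR])
    show "inj_on \<sigma> R" using bij_betw_imp_inj_on[OF bij] FRE inj_on_subset by blast
    show "\<sigma> ` R \<subseteq> R" using sR' by blast
  qed
  have gadd: "g (x + y) = g x + g y" if "x \<in> R" "y \<in> R" for x y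
  proof -
    have "x + y \<in> R" using sR that unfolding ksub_def by blast
    then show ?thesis using that hom FRE unfolding g_def induced_perm_def by auto
  qed
  have glin: "g (c * x) = c * g x" if "c \<in> K" "x \<in> R" for c x
  proof -
    have "c * x \<in> R" using sR that unfolding ksub_def by blast
    moreover have "c \<in> E" "\<sigma> c = c" using that K(2) FRE fixF by auto
    ultimately show ?thesis using that hom FRE unfolding g_def induced_perm_def by auto
  qed
  have exc': "\<not> (m = 1 \<and> n = 2)" using exc m(2) by auto
  have cK: "card K = 2 ^ m" using K(4) m(2) by simp
  have evg: "evenperm g"
    by (rule core_even[OF c2 K0 K1 Kadd Kmul Kinv K(3) cK m(1) sR finR cardR exc' gperm gadd glin])
  have NR: "nonzero_roots L = R - {0}" unfolding nonzero_roots_def R_def by auto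
  have geq: "induced_perm \<sigma> (nonzero_roots L) = g"
    unfolding NR g_def induced_perm_def using zR s0 by auto
  have "g permutes R - {0}"
    using gperm unfolding permutes_def g_def induced_perm_def using s0 by auto
  then show "induced_perm \<sigma> (nonzero_roots L) permutes (nonzero_roots L) \<and>
           evenperm (induced_perm \<sigma> (nonzero_roots L))" using geq evg NR by simp
qed


end
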